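(* Let $u$ be a smooth absolute $E_1$-minimizer on a domain of the $xy$-plane where $D\neq0$. Then $$-\alpha\,N(H)-\alpha H^2+2\alpha^2N(\theta)+\tfrac23H\,N^{\perp}N^{\perp}\theta+N^{\perp}N^{\perp}\alpha=-2\alpha\,N^{\perp}(\alpha).$$
   Context: Heisenberg group $H_1$ with contact form $\Theta=dt+x\,dy-y\,dx$; graph $t=u(x,y)$, $D=[(u_x-y)^2+(u_y+x)^2]^{1/2}$, $\cos\theta=(u_x-y)/D$, $\sin\theta=(u_y+x)/D$, $\alpha=-1/D$, $H=D^{-3}\{(u_y+x)^2u_{xx}-2(u_y+x)(u_x-y)u_{xy}+(u_x-y)^2u_{yy}\}$ (the $p$-mean curvature), $N^{\perp}=\sin\theta\,\partial_x-\cos\theta\,\partial_y$, $N=\cos\theta\,\partial_x+\sin\theta\,\partial_y$. Absolute $E_1$-minimizer: $-N^{\perp}\alpha+\frac12\alpha^2+\frac16H^2=0$ on the nonsingular domain. *)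

theory Defs
  imports "HOL-Analysis.Analysis"
begin

definition px :: "(real \<times> real \<Rightarrow> real) \<Rightarrow> real \<times> real \<Rightarrow> real" where
  "px f = (\<lambda>(x, y). deriv (\<lambda>s. f (s, y)) x)"

definition py :: "(real \<times> real \<Rightarrow> real) \<Rightarrow> real \<times> real \<Rightarrow> real" where
  "py f = (\<lambda>(x, y). deriv (\<lambda>s. f (x, s)) y)"

fun Ck_on :: "nat \<Rightarrow> (real \<times> real) set \<Rightarrow> (real \<times> real \<Rightarrow> real) \<Rightarrow> bool" where
  "Ck_on 0 \<Omega> f = continuous_on \<Omega> f"
| "Ck_on (Suc k) \<Omega> f =
     (continuous_on \<Omega> f \<and>
      (\<forall>(x, y) \<in> \<Omega>. (\<lambda>s. f (s, y)) differentiable (at x) \<and>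
                      (\<lambda>s. f (x, s)) differentiable (at y)) \<and>
      Ck_on k \<Omega> (px f) \<and> Ck_on k \<Omega> (py f))"

definition smooth_on :: "(real \<times> real) set \<Rightarrow> (real \<times> real \<Rightarrow> real) \<Rightarrow> bool" where
  "smooth_on \<Omega> f = (\<forall>k. Ck_on k \<Omega> f)"

text \<open>Quantities attached to the graph t = u(x,y) in the Heisenberg group H_1.\<close>

definition Dfun :: "(real \<times> real \<Rightarrow> real) \<Rightarrow> real \<times> real \<Rightarrow> real" where
  "Dfun u = (\<lambda>(x, y). sqrt ((px u (x, y) - y)\<^sup>2 + (py u (x, y) + x)\<^sup>2))"

definition cth :: "(real \<times> real \<Rightarrow> real) \<Rightarrow> real \<times> real \<Rightarrow> real" where
  "cth u = (\<lambda>(x, y). (px u (x, y) - y) / Dfun u (x, y))"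

definition sth :: "(real \<times> real \<Rightarrow> real) \<Rightarrow> real \<times> real \<Rightarrow> real" where
  "sth u = (\<lambda>(x, y). (py u (x, y) + x) / Dfun u (x, y))"

definition alpha :: "(real \<times> real \<Rightarrow> real) \<Rightarrow> real \<times> real \<Rightarrow> real" where
  "alpha u = (\<lambda>p. - 1 / Dfun u p)"

definition Hcurv :: "(real \<times> real \<Rightarrow> real) \<Rightarrow> real \<times> real \<Rightarrow> real" where
  "Hcurv u = (\<lambda>(x, y). (Dfun u (x, y)) powi (-3) *
      ((py u (x, y) + x)\<^sup>2 * px (px u) (x, y)
       - 2 * (py u (x, y) + x) * (px u (x, y) - y) * py (px u) (x, y)
       + (px u (x, y) - y)\<^sup>2 * py (py u) (x, y)))"

definition Nfld :: "(real \<times> real \<Rightarrow> real) \<Rightarrow> (real \<times> real \<Rightarrow> real) \<Rightarrow> real \<times> real \<Rightarrow> real" where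
  "Nfld u f = (\<lambda>p. cth u p * px f p + sth u p * py f p)"

definition Nperp :: "(real \<times> real \<Rightarrow> real) \<Rightarrow> (real \<times> real \<Rightarrow> real) \<Rightarrow> real \<times> real \<Rightarrow> real" where
  "Nperp u f = (\<lambda>p. sth u p * px f p - cth u p * py f p)"

definition abs_E1_minimizer :: "(real \<times> real) set \<Rightarrow> (real \<times> real \<Rightarrow> real) \<Rightarrow> bool" where
  "abs_E1_minimizer \<Omega> u =
     (\<forall>p \<in> \<Omega>. - Nperp u (alpha u) p + (1/2) * (alpha u p)\<^sup>2 + (1/6) * (Hcurv u p)\<^sup>2 = 0)"

end

theory Submission
  imports Defs
begin


lemma Ck_on_mono: "Ck_on k S f \<Longrightarrow> V \<subseteq> S \<Longrightarrow> Ck_on k V f"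
proof (induction k arbitrary: f)
  case 0 then show ?case using continuous_on_subset by auto
next
  case (Suc k) then show ?case using continuous_on_subset by fastforce
qed

lemma smooth_on_mono: "smooth_on S f \<Longrightarrow> V \<subseteq> S \<Longrightarrow> smooth_on V f"
  unfolding smooth_on_def using Ck_on_mono by blast

lemma smooth_on_px: "smooth_on S f \<Longrightarrow> smooth_on S (px f)"
  unfolding smooth_on_def by (metis Ck_on.simps(2))

lemma smooth_on_py: "smooth_on S f \<Longrightarrow> smooth_on S (py f)"
  unfolding smooth_on_def by (metis Ck_on.simps(2))

lemma smooth_on_cont: "smooth_on S f \<Longrightarrow> continuous_on S f"
  unfolding smooth_on_def by (metis Ck_on.simps(1))

lemma smooth_on_dx: "smooth_on S f \<Longrightarrow> (x,y) \<in> S \<Longrightarrow> ((\<lambda>s. f (s,y)) has_real_derivative px f (x,y)) (at x)"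
  unfolding smooth_on_def px_def
  by (metis (no_types, lifting) Ck_on.simps(2) DERIV_deriv_iff_real_differentiable case_prodD old.prod.case)

lemma smooth_on_dy: "smooth_on S f \<Longrightarrow> (x,y) \<in> S \<Longrightarrow> ((\<lambda>s. f (x,s)) has_real_derivative py f (x,y)) (at y)"
  unfolding smooth_on_def py_def
  by (metis (no_types, lifting) Ck_on.simps(2) DERIV_deriv_iff_real_differentiable case_prodD old.prod.case)

lemma px_eq: "((\<lambda>s. f (s,y)) has_real_derivative d) (at x) \<Longrightarrow> px f (x,y) = d"
  by (simp add: px_def DERIV_imp_deriv)

lemma py_eq: "((\<lambda>s. f (x,s)) has_real_derivative d) (at y) \<Longrightarrow> py f (x,y) = d"
  by (simp add: py_def DERIV_imp_deriv)

lemma px_cong: assumes "open V" "(x,y) \<in> V" "\<And>z. z \<in> V \<Longrightarrow> f z = g z"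
  shows "px f (x,y) = px g (x,y)"
proof -
  obtain e where e: "e > 0" "ball (x,y) e \<subseteq> V" using assms openE by blast
  have "eventually (\<lambda>s. f (s,y) = g (s,y)) (nhds x)"
    unfolding eventually_nhds_metric
    apply (rule exI[of _ e]) using e assms(3) by (auto simp: dist_Pair_Pair dist_commute subset_iff)
  then show ?thesis by (simp add: px_def deriv_cong_ev)
qed

lemma py_cong: assumes "open V" "(x,y) \<in> V" "\<And>z. z \<in> V \<Longrightarrow> f z = g z"
  shows "py f (x,y) = py g (x,y)"
proof -
  obtain e where e: "e > 0" "ball (x,y) e \<subseteq> V" using assms openE by blast
  have "eventually (\<lambda>s. f (x,s) = g (x,s)) (nhds y)"
    unfolding eventually_nhds_metric
    apply (rule exI[of _ e]) using e assms(3) by (auto simp: dist_Pair_Pair dist_commute subset_iff)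
  then show ?thesis by (simp add: py_def deriv_cong_ev)
qed



lemma dist_small: "\<bar>a - x\<bar> < h \<Longrightarrow> \<bar>b - y\<bar> < h \<Longrightarrow> dist (a,b) (x,y) < 2*h"
proof -
  assume "\<bar>a - x\<bar> < h" "\<bar>b - y\<bar> < h"
  moreover have "dist (a,b) (x,y) \<le> \<bar>a - x\<bar> + \<bar>b - y\<bar>"
    using sqrt_sum_squares_le_sum_abs[of "a-x" "b-y"] by (simp add: dist_Pair_Pair dist_real_def)
  ultimately show ?thesis by linarith
qed

lemma abs_aux: "\<bar>a - A\<bar> < \<bar>A - B\<bar>/2 \<Longrightarrow> \<bar>b - B\<bar> < \<bar>A - B\<bar>/2 \<Longrightarrow> a = (b::real) \<Longrightarrow> False"
  by (cases "a \<le> A"; cases "a \<le> B"; cases "A \<le> B"; simp add: abs_if split: if_splits)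

lemma schwarz_gen:
  fixes f :: "real \<times> real \<Rightarrow> real"
  assumes S: "open S" "(x,y) \<in> S"
    and hx: "\<And>a b. (a,b) \<in> S \<Longrightarrow> ((\<lambda>s. f (s,b)) has_real_derivative px f (a,b)) (at a)"
    and hy: "\<And>a b. (a,b) \<in> S \<Longrightarrow> ((\<lambda>s. f (a,s)) has_real_derivative py f (a,b)) (at b)"
    and hxy: "\<And>a b. (a,b) \<in> S \<Longrightarrow> ((\<lambda>t. px f (a,t)) has_real_derivative py (px f) (a,b)) (at b)"
    and hyx: "\<And>a b. (a,b) \<in> S \<Longrightarrow> ((\<lambda>s. py f (s,b)) has_real_derivative px (py f) (a,b)) (at a)"
    and c1: "isCont (py (px f)) (x,y)" and c2: "isCont (px (py f)) (x,y)"
  shows "px (py f) (x,y) = py (px f) (x,y)"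
proof (rule ccontr)
  let ?A = "py (px f) (x,y)" and ?B = "px (py f) (x,y)"
  assume ne: "?B \<noteq> ?A"
  define e where "e = \<bar>?A - ?B\<bar> / 2"
  have e: "e > 0" using ne by (simp add: e_def)
  obtain d1 where d1: "d1 > 0" "\<And>z. dist z (x,y) < d1 \<Longrightarrow> dist (py (px f) z) ?A < e"
    using c1 e unfolding continuous_at_eps_delta by blast
  obtain d2 where d2: "d2 > 0" "\<And>z. dist z (x,y) < d2 \<Longrightarrow> dist (px (py f) z) ?B < e"
    using c2 e unfolding continuous_at_eps_delta by blast
  obtain r where r: "r > 0" "ball (x,y) r \<subseteq> S" using S openE by blast
  define h where "h = min r (min d1 d2) / 3"
  have h: "h > 0" "2*h < r" "2*h < d1" "2*h < d2" using r d1 d2 by (auto simp: h_def)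
  have inS: "(a,b) \<in> S" if "x \<le> a" "a \<le> x + h" "y \<le> b" "b \<le> y + h" for a b
  proof -
    have "dist (a,b) (x,y) < 2*(h+1)" using that h by (intro dist_small) auto
    have "dist (a,b) (x,y) \<le> \<bar>a - x\<bar> + \<bar>b - y\<bar>"
      using sqrt_sum_squares_le_sum_abs[of "a-x" "b-y"] by (simp add: dist_Pair_Pair dist_real_def)
    also have "\<dots> \<le> 2*h" using that by auto
    finally have "dist (a,b) (x,y) < r" using h by linarith
    then show ?thesis using r by (auto simp: dist_commute)
  qed
  define \<Delta> where "\<Delta> = f (x+h,y+h) - f (x+h,y) - f (x,y+h) + f (x,y)"
  have der1: "((\<lambda>s. f (s,y+h) - f (s,y)) has_real_derivative px f (s,y+h) - px f (s,y)) (at s)"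
    if "x \<le> s" "s \<le> x+h" for s using that h by (intro derivative_intros hx inS) auto
  obtain \<xi> where \<xi>: "x < \<xi>" "\<xi> < x + h"
    "(f (x+h,y+h) - f (x+h,y)) - (f (x,y+h) - f (x,y)) = ((x+h) - x) * (px f (\<xi>,y+h) - px f (\<xi>,y))"
    using MVT2[of x "x+h" "\<lambda>s. f (s,y+h) - f (s,y)" "\<lambda>s. px f (s,y+h) - px f (s,y)", OF _ der1] h
    by auto
  obtain \<eta> where \<eta>: "y < \<eta>" "\<eta> < y + h"
    "px f (\<xi>,y+h) - px f (\<xi>,y) = ((y+h) - y) * py (px f) (\<xi>,\<eta>)"
    using MVT2[of y "y+h" "\<lambda>t. px f (\<xi>,t)" "\<lambda>t. py (px f) (\<xi>,t)"] h \<xi> hxy inS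
    by auto
  have D1: "\<Delta> = h*h * py (px f) (\<xi>,\<eta>)" using \<xi> \<eta> by (simp add: \<Delta>_def algebra_simps)
  have der2: "((\<lambda>s. f (x+h,s) - f (x,s)) has_real_derivative py f (x+h,s) - py f (x,s)) (at s)"
    if "y \<le> s" "s \<le> y+h" for s using that h by (intro derivative_intros hy inS) auto
  obtain \<eta>' where \<eta>': "y < \<eta>'" "\<eta>' < y + h"
    "(f (x+h,y+h) - f (x,y+h)) - (f (x+h,y) - f (x,y)) = ((y+h) - y) * (py f (x+h,\<eta>') - py f (x,\<eta>'))"
    using MVT2[of y "y+h" "\<lambda>s. f (x+h,s) - f (x,s)" "\<lambda>s. py f (x+h,s) - py f (x,s)", OF _ der2] h
    by auto
  obtain \<xi>' where \<xi>': "x < \<xi>'" "\<xi>' < x + h"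
    "py f (x+h,\<eta>') - py f (x,\<eta>') = ((x+h) - x) * px (py f) (\<xi>',\<eta>')"
    using MVT2[of x "x+h" "\<lambda>s. py f (s,\<eta>')" "\<lambda>s. px (py f) (s,\<eta>')"] h \<eta>' hyx inS
    by auto
  have D2: "\<Delta> = h*h * px (py f) (\<xi>',\<eta>')" using \<xi>' \<eta>' by (simp add: \<Delta>_def algebra_simps)
  have eq: "py (px f) (\<xi>,\<eta>) = px (py f) (\<xi>',\<eta>')" using D1 D2 h by simp
  have "dist (\<xi>,\<eta>) (x,y) < 2*h" using \<xi> \<eta> by (intro dist_small) auto
  then have a1: "dist (py (px f) (\<xi>,\<eta>)) ?A < e" using d1 h by auto
  have "dist (\<xi>',\<eta>') (x,y) < 2*h" using \<xi>' \<eta>' by (intro dist_small) auto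
  then have a2: "dist (px (py f) (\<xi>',\<eta>')) ?B < e" using d2 h by auto
  from a1 a2 eq show False unfolding e_def dist_real_def by (rule abs_aux)
qed

lemma schwarz_smooth:
  assumes "open S" "smooth_on S f" "(x,y) \<in> S"
  shows "px (py f) (x,y) = py (px f) (x,y)"
proof (rule schwarz_gen[OF assms(1,3)])
  show "isCont (py (px f)) (x, y)"
    using assms smooth_on_cont[OF smooth_on_py[OF smooth_on_px[OF assms(2)]]]
    by (simp add: continuous_on_eq_continuous_at)
  show "isCont (px (py f)) (x, y)"
    using assms smooth_on_cont[OF smooth_on_px[OF smooth_on_py[OF assms(2)]]]
    by (simp add: continuous_on_eq_continuous_at)
qed (auto intro: smooth_on_dx smooth_on_dy smooth_on_px smooth_on_py assms(2)
  smooth_on_dy[OF smooth_on_px[OF assms(2)], simplified]  smooth_on_dx[OF smooth_on_py[OF assms(2)]])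



lemma Dfun_app: "Dfun u (x,y) = sqrt ((px u (x, y) - y)\<^sup>2 + (py u (x, y) + x)\<^sup>2)"
  by (simp add: Dfun_def)

lemma aux_inv: "inverse a * inverse 2 * (2 * n) = n * inverse (a::real)"
  by simp

lemma fun_cong2: "f = (\<lambda>p. g p) \<Longrightarrow> f x = g x" by simp

lemma powi_m3: "(z::real) powi (-3) = 1 / z^3"
  by (simp add: power_int_minus divide_inverse)

lemma Hcurv_alt: "Hcurv u = (\<lambda>(x, y). 
      ((py u (x, y) + x)\<^sup>2 * px (px u) (x, y)
       - 2 * (py u (x, y) + x) * (px u (x, y) - y) * py (px u) (x, y)
       + (px u (x, y) - y)\<^sup>2 * py (py u) (x, y)) / (Dfun u (x,y))^3)"
  unfolding Hcurv_def powi_m3 by (auto simp: fun_eq_iff)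


lemma alg_I1:
  fixes D P Q a b c Dx Dy :: real
  assumes "D > 0" "D * D = P^2 + Q^2" "Dx = (P * a + Q * (b + 1)) / D" "Dy = (P * (b - 1) + Q * c) / D"
  shows "(Q^2 * a - 2 * Q * P * b + P^2 * c) / D^3 = (a * D - P * Dx) / (D * D) + (c * D - Q * Dy) / (D * D)"
proof -
  have "(a * D - P * Dx) / (D * D) + (c * D - Q * Dy) / (D * D) = ((a + c) * (D*D) - P * (P * a + Q * (b + 1)) - Q * (P * (b - 1) + Q * c)) / D^3"
    using assms(1) by (simp add: assms(3,4) field_simps power3_eq_cube)
  also have "\<dots> = (Q^2 * a - 2 * Q * P * b + P^2 * c) / D^3"
    by (simp add: assms(2) algebra_simps power2_eq_square)
  finally show ?thesis by simp
qed

lemma alg_I2: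
  fixes D P Q b Dx Dy :: real
  assumes "D \<noteq> 0"
  shows "(-1/D) * (((b+1)*D - Q*Dx)/(D*D) - ((b-1)*D - P*Dy)/(D*D)) = ((Q/D) * (Dx/(D*D)) - (P/D)*(Dy/(D*D))) - 2 * (-1/D)^2"
  using assms by (simp add: field_simps power2_eq_square)

lemma final_alg:
  fixes c s a H tx ty txx txy tyx tyy Hx Hy ax ay cx cy sx sy X1 Y1 X2 Y2 X3 Y3 :: real
  assumes cs: "c^2 + s^2 = 1" and a0: "a \<noteq> 0"
    and cx: "cx = - s * tx" and cy: "cy = - s * ty" and sx: "sx = c * tx" and sy: "sy = c * ty"
    and sch: "tyx = txy"
    and I1: "s * tx - c * ty = - H"
    and E1: "s * ax - c * ay = a^2 / 2 + H^2 / 6"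
    and NT: "c * tx + s * ty = -3/2 * a + H * H / (6 * a)"
    and X1a: "X1 = - Hx" and X1b: "X1 = s * txx + sx * tx - (c * tyx + cx * ty)"
    and Y1a: "Y1 = - Hy" and Y1b: "Y1 = s * txy + sy * tx - (c * tyy + cy * ty)"
    and X2a: "X2 = -3/2 * ax + ((H * Hx + Hx * H) * (6 * a) - H * H * (6 * ax)) / ((6 * a) * (6 * a))"
    and X2b: "X2 = c * txx + cx * tx + (s * tyx + sx * ty)"
    and Y2a: "Y2 = -3/2 * ay + ((H * Hy + Hy * H) * (6 * a) - H * H * (6 * ay)) / ((6 * a) * (6 * a))"
    and Y2b: "Y2 = c * txy + cy * tx + (s * tyy + sy * ty)"
    and X3: "X3 = 1/2 * (a * ax + ax * a) + 1/6 * (H * Hx + Hx * H)" and Y3: "Y3 = 1/2 * (a * ay + ay * a) + 1/6 * (H * Hy + Hy * H)"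
  shows "- a * (c * Hx + s * Hy) - a * H^2 + 2 * a^2 * (c * tx + s * ty)
         + 2/3 * H * (s * X1 - c * Y1) + (s * X3 - c * Y3) = - 2 * a * (s * ax - c * ay)"
proof -
  define NH where "NH = c * Hx + s * Hy"
  define NpH where "NpH = s * Hx - c * Hy"
  define A where "A = s * ax - c * ay"
  define Nt where "Nt = c * tx + s * ty"
  have comm: "c * X1 + s * Y1 - (s * X2 - c * Y2) = tx^2 + ty^2"
  proof -
    have "c * X1 + s * Y1 - (s * X2 - c * Y2) = (c^2 + s^2) * tx^2 + (c^2 + s^2) * ty^2"
      unfolding X1b Y1b X2b Y2b cx cy sx sy sch by (simp add: algebra_simps power2_eq_square)
    then show ?thesis using cs by simp
  qed
  have sq: "tx^2 + ty^2 = Nt^2 + H^2"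
  proof -
    have Hv: "H = c * ty - s * tx" using I1 by linarith
    have "Nt^2 + H^2 = (c * tx + s * ty)^2 + (s * tx - c * ty)^2" unfolding Hv Nt_def by (simp add: power2_eq_square algebra_simps)
    also have "\<dots> = (c^2 + s^2) * (tx^2 + ty^2)" by (simp add: power2_eq_square algebra_simps)
    finally show ?thesis using cs by simp
  qed
  have l1: "c * X1 + s * Y1 = - NH" unfolding X1a Y1a NH_def by simp
  have l2: "s * X2 - c * Y2 = -3/2 * A + (2 * H * NpH) / (6 * a) - H * H * (6 * A) / ((6 * a) * (6 * a))"
    unfolding X2a Y2a A_def NpH_def using a0 by (simp add: field_simps)
  have l3: "s * X1 - c * Y1 = - NpH" unfolding X1a Y1a NpH_def by simp
  have l4: "s * X3 - c * Y3 = a * A + H * NpH / 3" unfolding X3 Y3 A_def NpH_def by (simp add: field_simps)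
  have NHv: "NH = - (Nt^2) - H^2 - (-3/2 * A + (2 * H * NpH) / (6 * a) - H * H * (6 * A) / ((6 * a) * (6 * a)))"
    using comm sq l1 l2 by linarith
  have Av: "A = a^2 / 2 + H^2 / 6" using E1 A_def by simp
  have Ntv: "Nt = -3/2 * a + H * H / (6 * a)" using NT Nt_def by simp
  have goal: "- a * NH - a * H^2 + 2 * a^2 * Nt + 2/3 * H * (- NpH) + (a * A + H * NpH / 3) = - 2 * a * A"
    unfolding NHv Av Ntv using a0 by (simp add: field_simps power2_eq_square)
  show ?thesis using goal l3 l4 unfolding NH_def A_def Nt_def by simp
qed

lemma alg_NT:
  fixes a Nt Np H :: real
  assumes "a \<noteq> 0" "a * Nt = Np - 2 * a^2" "- Np + (1/2) * a^2 + (1/6) * H^2 = 0"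
  shows "Nt = -3/2 * a + H * H / (6 * a)"
proof -
  have e: "a * (-3/2 * a + H * H / (6 * a)) = -3/2 * a^2 + H^2 / 6"
    using assms(1) by (simp add: field_simps power2_eq_square)
  have "a * Nt = a * (-3/2 * a + H * H / (6 * a))"
    unfolding e using assms(2,3) by linarith
  then show ?thesis using assms(1) by simp
qed

context
  fixes u :: "real \<times> real \<Rightarrow> real" and \<Omega> :: "(real \<times> real) set"
  assumes op: "open \<Omega>" and sm: "smooth_on \<Omega> u" and nz: "\<forall>p \<in> \<Omega>. Dfun u p \<noteq> 0"
begin

lemma Dpos: "q \<in> \<Omega> \<Longrightarrow> Dfun u q > 0"
proof -
  assume q: "q \<in> \<Omega>"
  have "Dfun u q \<ge> 0" by (cases q) (simp add: Dfun_def)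
  then show ?thesis using nz q by (simp add: less_le)
qed

lemma sm1: "smooth_on \<Omega> (px u)" "smooth_on \<Omega> (py u)"
  using sm smooth_on_px smooth_on_py by auto
lemma sm2: "smooth_on \<Omega> (px (px u))" "smooth_on \<Omega> (py (px u))" "smooth_on \<Omega> (px (py u))" "smooth_on \<Omega> (py (py u))"
  using sm1 smooth_on_px smooth_on_py by auto

lemma schw_u: "q \<in> \<Omega> \<Longrightarrow> px (py u) q = py (px u) q"
  using schwarz_smooth[OF op sm] by (cases q) auto

lemma dD_x: assumes "(x,y) \<in> \<Omega>"
  shows "((\<lambda>s. Dfun u (s,y)) has_real_derivative
     ((px u (x,y) - y) * px (px u) (x,y) + (py u (x,y) + x) * (px (py u) (x,y) + 1)) / Dfun u (x,y)) (at x)"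
proof -
  have g: "((\<lambda>s. (px u (s,y) - y)\<^sup>2 + (py u (s,y) + s)\<^sup>2) has_real_derivative
     2 * ((px u (x,y) - y) * px (px u) (x,y) + (py u (x,y) + x) * (px (py u) (x,y) + 1))) (at x)"
    apply (intro derivative_eq_intros)
    apply (rule smooth_on_dx[OF sm1(1) assms] smooth_on_dx[OF sm1(2) assms] refl)+
    apply (simp add: algebra_simps)
    done
  have pos: "(px u (x,y) - y)\<^sup>2 + (py u (x,y) + x)\<^sup>2 > 0"
    using Dpos[OF assms] by (simp add: Dfun_def)
  have "((\<lambda>s. sqrt ((px u (s,y) - y)\<^sup>2 + (py u (s,y) + s)\<^sup>2)) has_real_derivative
     inverse (sqrt ((px u (x,y) - y)\<^sup>2 + (py u (x,y) + x)\<^sup>2)) / 2 *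
     (2 * ((px u (x,y) - y) * px (px u) (x,y) + (py u (x,y) + x) * (px (py u) (x,y) + 1)))) (at x)"
    by (rule DERIV_chain2[OF DERIV_real_sqrt[OF pos] g])
  then show ?thesis unfolding Dfun_app by (rule DERIV_cong) (simp only: divide_inverse aux_inv)
qed

lemma dD_y: assumes "(x,y) \<in> \<Omega>"
  shows "((\<lambda>s. Dfun u (x,s)) has_real_derivative
     ((px u (x,y) - y) * (py (px u) (x,y) - 1) + (py u (x,y) + x) * py (py u) (x,y)) / Dfun u (x,y)) (at y)"
proof -
  have g: "((\<lambda>s. (px u (x,s) - s)\<^sup>2 + (py u (x,s) + x)\<^sup>2) has_real_derivative
     2 * ((px u (x,y) - y) * (py (px u) (x,y) - 1) + (py u (x,y) + x) * py (py u) (x,y))) (at y)"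
    apply (intro derivative_eq_intros)
    apply (rule smooth_on_dy[OF sm1(1) assms] smooth_on_dy[OF sm1(2) assms] refl)+
    apply (simp add: algebra_simps)
    done
  have pos: "(px u (x,y) - y)\<^sup>2 + (py u (x,y) + x)\<^sup>2 > 0"
    using Dpos[OF assms] by (simp add: Dfun_def)
  have "((\<lambda>s. sqrt ((px u (x,s) - s)\<^sup>2 + (py u (x,s) + x)\<^sup>2)) has_real_derivative
     inverse (sqrt ((px u (x,y) - y)\<^sup>2 + (py u (x,y) + x)\<^sup>2)) / 2 *
     (2 * ((px u (x,y) - y) * (py (px u) (x,y) - 1) + (py u (x,y) + x) * py (py u) (x,y)))) (at y)"
    by (rule DERIV_chain2[OF DERIV_real_sqrt[OF pos] g])
  then show ?thesis unfolding Dfun_app by (rule DERIV_cong) (simp only: divide_inverse aux_inv)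
qed


definition "Dxv q = ((px u q - snd q) * px (px u) q + (py u q + fst q) * (px (py u) q + 1)) / Dfun u q"
definition "Dyv q = ((px u q - snd q) * (py (px u) q - 1) + (py u q + fst q) * py (py u) q) / Dfun u q"

lemma dDx: "(x,y) \<in> \<Omega> \<Longrightarrow> ((\<lambda>s. Dfun u (s,y)) has_real_derivative Dxv (x,y)) (at x)"
  using dD_x by (simp add: Dxv_def)
lemma dDy: "(x,y) \<in> \<Omega> \<Longrightarrow> ((\<lambda>s. Dfun u (x,s)) has_real_derivative Dyv (x,y)) (at y)"
  using dD_y by (simp add: Dyv_def)

lemma dc_x: assumes "(x,y) \<in> \<Omega>"
  shows "((\<lambda>s. cth u (s,y)) has_real_derivative
     (px (px u) (x,y) * Dfun u (x,y) - (px u (x,y) - y) * Dxv (x,y)) / (Dfun u (x,y) * Dfun u (x,y))) (at x)"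
proof -
  have a: "((\<lambda>s. px u (s,y) - y) has_real_derivative px (px u) (x,y)) (at x)"
    using DERIV_diff[OF smooth_on_dx[OF sm1(1) assms] DERIV_const[of y]] by simp
  have "((\<lambda>s. (px u (s,y) - y) / Dfun u (s,y)) has_real_derivative
     (px (px u) (x,y) * Dfun u (x,y) - (px u (x,y) - y) * Dxv (x,y)) / (Dfun u (x,y) * Dfun u (x,y))) (at x)"
    by (rule DERIV_divide[OF a dDx[OF assms]]) (use nz assms in auto)
  then show ?thesis by (simp add: cth_def)
qed

lemma dc_y: assumes "(x,y) \<in> \<Omega>"
  shows "((\<lambda>s. cth u (x,s)) has_real_derivative
     ((py (px u) (x,y) - 1) * Dfun u (x,y) - (px u (x,y) - y) * Dyv (x,y)) / (Dfun u (x,y) * Dfun u (x,y))) (at y)"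
proof -
  have a: "((\<lambda>s. px u (x,s) - s) has_real_derivative py (px u) (x,y) - 1) (at y)"
    using DERIV_diff[OF smooth_on_dy[OF sm1(1) assms] DERIV_ident] by simp
  have "((\<lambda>s. (px u (x,s) - s) / Dfun u (x,s)) has_real_derivative
     ((py (px u) (x,y) - 1) * Dfun u (x,y) - (px u (x,y) - y) * Dyv (x,y)) / (Dfun u (x,y) * Dfun u (x,y))) (at y)"
    by (rule DERIV_divide[OF a dDy[OF assms]]) (use nz assms in auto)
  then show ?thesis by (simp add: cth_def)
qed

lemma ds_x: assumes "(x,y) \<in> \<Omega>"
  shows "((\<lambda>s. sth u (s,y)) has_real_derivative
     ((px (py u) (x,y) + 1) * Dfun u (x,y) - (py u (x,y) + x) * Dxv (x,y)) / (Dfun u (x,y) * Dfun u (x,y))) (at x)"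
proof -
  have a: "((\<lambda>s. py u (s,y) + s) has_real_derivative px (py u) (x,y) + 1) (at x)"
    using DERIV_add[OF smooth_on_dx[OF sm1(2) assms] DERIV_ident] by simp
  have "((\<lambda>s. (py u (s,y) + s) / Dfun u (s,y)) has_real_derivative
     ((px (py u) (x,y) + 1) * Dfun u (x,y) - (py u (x,y) + x) * Dxv (x,y)) / (Dfun u (x,y) * Dfun u (x,y))) (at x)"
    by (rule DERIV_divide[OF a dDx[OF assms]]) (use nz assms in auto)
  then show ?thesis by (simp add: sth_def)
qed

lemma ds_y: assumes "(x,y) \<in> \<Omega>"
  shows "((\<lambda>s. sth u (x,s)) has_real_derivative
     (py (py u) (x,y) * Dfun u (x,y) - (py u (x,y) + x) * Dyv (x,y)) / (Dfun u (x,y) * Dfun u (x,y))) (at y)"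
proof -
  have a: "((\<lambda>s. py u (x,s) + x) has_real_derivative py (py u) (x,y)) (at y)"
    using DERIV_add[OF smooth_on_dy[OF sm1(2) assms] DERIV_const[of x]] by simp
  have "((\<lambda>s. (py u (x,s) + x) / Dfun u (x,s)) has_real_derivative
     (py (py u) (x,y) * Dfun u (x,y) - (py u (x,y) + x) * Dyv (x,y)) / (Dfun u (x,y) * Dfun u (x,y))) (at y)"
    by (rule DERIV_divide[OF a dDy[OF assms]]) (use nz assms in auto)
  then show ?thesis by (simp add: sth_def)
qed

lemma da_x: assumes "(x,y) \<in> \<Omega>"
  shows "((\<lambda>s. alpha u (s,y)) has_real_derivative Dxv (x,y) / (Dfun u (x,y) * Dfun u (x,y))) (at x)"
proof -
  have "((\<lambda>s. (- 1) / Dfun u (s,y)) has_real_derivative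
     (0 * Dfun u (x,y) - (- 1) * Dxv (x,y)) / (Dfun u (x,y) * Dfun u (x,y))) (at x)"
    by (rule DERIV_divide[OF DERIV_const dDx[OF assms]]) (use nz assms in auto)
  then show ?thesis by (simp add: alpha_def)
qed

lemma da_y: assumes "(x,y) \<in> \<Omega>"
  shows "((\<lambda>s. alpha u (x,s)) has_real_derivative Dyv (x,y) / (Dfun u (x,y) * Dfun u (x,y))) (at y)"
proof -
  have "((\<lambda>s. (- 1) / Dfun u (x,s)) has_real_derivative
     (0 * Dfun u (x,y) - (- 1) * Dyv (x,y)) / (Dfun u (x,y) * Dfun u (x,y))) (at y)"
    by (rule DERIV_divide[OF DERIV_const dDy[OF assms]]) (use nz assms in auto)
  then show ?thesis by (simp add: alpha_def)
qed


lemma I1: assumes "(x,y) \<in> \<Omega>"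
  shows "Hcurv u (x,y) = px (cth u) (x,y) + py (sth u) (x,y)"
proof -
  have e: "px (py u) (x,y) = py (px u) (x,y)" using schw_u assms by blast
  have D: "Dfun u (x,y) > 0" using Dpos assms by blast
  have DD: "Dfun u (x,y) * Dfun u (x,y) = (px u (x,y) - y)^2 + (py u (x,y) + x)^2"
    using D by (simp add: Dfun_app)
  show ?thesis
    unfolding px_eq[OF dc_x[OF assms]] py_eq[OF ds_y[OF assms]] Hcurv_alt
    apply (simp only: prod.case)
    apply (rule alg_I1[OF D DD])
     apply (simp add: Dxv_def e)
    apply (simp add: Dyv_def)
    done
qed

lemma I2: assumes "(x,y) \<in> \<Omega>"
  shows "alpha u (x,y) * (px (sth u) (x,y) - py (cth u) (x,y)) = Nperp u (alpha u) (x,y) - 2 * (alpha u (x,y))^2"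
proof -
  have e: "px (py u) (x,y) = py (px u) (x,y)" using schw_u assms by blast
  have D: "Dfun u (x,y) \<noteq> 0" using nz assms by blast
  show ?thesis
    unfolding px_eq[OF ds_x[OF assms]] py_eq[OF dc_y[OF assms]] Nperp_def px_eq[OF da_x[OF assms]] py_eq[OF da_y[OF assms]]
    unfolding e
    using alg_I2[OF D, of "py (px u) (x,y)" "py u (x,y) + x" "Dxv (x,y)" "px u (x,y) - y" "Dyv (x,y)"]
    by (simp add: alpha_def cth_def sth_def)
qed


lemma dH_x: assumes q: "(x,y) \<in> \<Omega>"
  shows "((\<lambda>s. Hcurv u (s,y)) has_real_derivative px (Hcurv u) (x,y)) (at x)"
proof -
  have "\<exists>d. ((\<lambda>s. Hcurv u (s,y)) has_real_derivative d) (at x)"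
    unfolding Hcurv_alt prod.case
    apply (rule exI)
    apply (intro derivative_eq_intros)
    apply (rule smooth_on_dx[OF sm1(1) q] smooth_on_dx[OF sm1(2) q] smooth_on_dx[OF sm2(1) q]
       smooth_on_dx[OF sm2(2) q] smooth_on_dx[OF sm2(4) q] dDx[OF q] refl)+
    using nz q by auto
  then show ?thesis
    by (metis DERIV_deriv_iff_real_differentiable px_def prod.case real_differentiable_def)
qed

lemma dH_y: assumes q: "(x,y) \<in> \<Omega>"
  shows "((\<lambda>s. Hcurv u (x,s)) has_real_derivative py (Hcurv u) (x,y)) (at y)"
proof -
  have "\<exists>d. ((\<lambda>s. Hcurv u (x,s)) has_real_derivative d) (at y)"
    unfolding Hcurv_alt prod.case
    apply (rule exI)
    apply (intro derivative_eq_intros)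
    apply (rule smooth_on_dy[OF sm1(1) q] smooth_on_dy[OF sm1(2) q] smooth_on_dy[OF sm2(1) q]
       smooth_on_dy[OF sm2(2) q] smooth_on_dy[OF sm2(4) q] dDy[OF q] refl)+
    using nz q by auto
  then show ?thesis
    by (metis DERIV_deriv_iff_real_differentiable py_def prod.case real_differentiable_def)
qed

lemma dA_x: "(x,y) \<in> \<Omega> \<Longrightarrow> ((\<lambda>s. alpha u (s,y)) has_real_derivative px (alpha u) (x,y)) (at x)"
  using da_x px_eq by metis
lemma dA_y: "(x,y) \<in> \<Omega> \<Longrightarrow> ((\<lambda>s. alpha u (x,s)) has_real_derivative py (alpha u) (x,y)) (at y)"
  using da_y py_eq by metis
lemma dC_x: "(x,y) \<in> \<Omega> \<Longrightarrow> ((\<lambda>s. cth u (s,y)) has_real_derivative px (cth u) (x,y)) (at x)"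
  using dc_x px_eq by metis
lemma dC_y: "(x,y) \<in> \<Omega> \<Longrightarrow> ((\<lambda>s. cth u (x,s)) has_real_derivative py (cth u) (x,y)) (at y)"
  using dc_y py_eq by metis
lemma dS_x: "(x,y) \<in> \<Omega> \<Longrightarrow> ((\<lambda>s. sth u (s,y)) has_real_derivative px (sth u) (x,y)) (at x)"
  using ds_x px_eq by metis
lemma dS_y: "(x,y) \<in> \<Omega> \<Longrightarrow> ((\<lambda>s. sth u (x,s)) has_real_derivative py (sth u) (x,y)) (at y)"
  using ds_y py_eq by metis


context
  fixes V :: "(real \<times> real) set" and \<theta> :: "real \<times> real \<Rightarrow> real"
  assumes Vo: "open V" and VO: "V \<subseteq> \<Omega>" and sth: "smooth_on V \<theta>"
    and csV: "\<forall>q \<in> V. cos (\<theta> q) = cth u q \<and> sin (\<theta> q) = sth u q"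
    and E1: "abs_E1_minimizer \<Omega> u"
begin

lemma th_cx: assumes q: "(x,y) \<in> V" shows "px (cth u) (x,y) = - sth u (x,y) * px \<theta> (x,y)"
proof -
  have "px (cth u) (x,y) = px (\<lambda>z. cos (\<theta> z)) (x,y)" by (rule px_cong[OF Vo q]) (use csV in auto)
  also have "\<dots> = - sin (\<theta> (x,y)) * px \<theta> (x,y)"
    by (rule px_eq) (rule DERIV_chain2[OF DERIV_cos smooth_on_dx[OF sth q]])
  finally show ?thesis using csV q by auto
qed

lemma th_cy: assumes q: "(x,y) \<in> V" shows "py (cth u) (x,y) = - sth u (x,y) * py \<theta> (x,y)"
proof -
  have "py (cth u) (x,y) = py (\<lambda>z. cos (\<theta> z)) (x,y)" by (rule py_cong[OF Vo q]) (use csV in auto)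
  also have "\<dots> = - sin (\<theta> (x,y)) * py \<theta> (x,y)"
    by (rule py_eq) (rule DERIV_chain2[OF DERIV_cos smooth_on_dy[OF sth q]])
  finally show ?thesis using csV q by auto
qed

lemma th_sx: assumes q: "(x,y) \<in> V" shows "px (sth u) (x,y) = cth u (x,y) * px \<theta> (x,y)"
proof -
  have "px (sth u) (x,y) = px (\<lambda>z. sin (\<theta> z)) (x,y)" by (rule px_cong[OF Vo q]) (use csV in auto)
  also have "\<dots> = cos (\<theta> (x,y)) * px \<theta> (x,y)"
    by (rule px_eq) (rule DERIV_chain2[OF DERIV_sin smooth_on_dx[OF sth q]])
  finally show ?thesis using csV q by auto
qed

lemma th_sy: assumes q: "(x,y) \<in> V" shows "py (sth u) (x,y) = cth u (x,y) * py \<theta> (x,y)"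
proof -
  have "py (sth u) (x,y) = py (\<lambda>z. sin (\<theta> z)) (x,y)" by (rule py_cong[OF Vo q]) (use csV in auto)
  also have "\<dots> = cos (\<theta> (x,y)) * py \<theta> (x,y)"
    by (rule py_eq) (rule DERIV_chain2[OF DERIV_sin smooth_on_dy[OF sth q]])
  finally show ?thesis using csV q by auto
qed

lemma NpTh: assumes q: "q \<in> V" shows "Nperp u \<theta> q = - Hcurv u q"
proof -
  obtain x y where qq: "q = (x,y)" by (cases q)
  have qO: "(x,y) \<in> \<Omega>" using q qq VO by auto
  show ?thesis unfolding qq Nperp_def I1[OF qO]
    using th_cx[of x y] th_sy[of x y] q qq by auto
qed

lemma NTh: assumes q: "q \<in> V" shows "Nfld u \<theta> q = -3/2 * alpha u q + Hcurv u q * Hcurv u q / (6 * alpha u q)"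
proof -
  obtain x y where qq: "q = (x,y)" by (cases q)
  have qO: "(x,y) \<in> \<Omega>" using q qq VO by auto
  have a0: "alpha u (x,y) \<noteq> 0" using nz qO by (simp add: alpha_def)
  have N: "Nfld u \<theta> (x,y) = px (sth u) (x,y) - py (cth u) (x,y)"
    unfolding Nfld_def using th_sx[of x y] th_cy[of x y] q qq by auto
  have e: "- Nperp u (alpha u) (x,y) + (1/2) * (alpha u (x,y))^2 + (1/6) * (Hcurv u (x,y))^2 = 0"
    using E1 qO unfolding abs_E1_minimizer_def by blast
  show ?thesis unfolding qq
    by (rule alg_NT[OF a0 _ e]) (use I2[OF qO] N in simp)
qed

lemma main_at: assumes q: "(x,y) \<in> V"
  shows "- alpha u (x,y) * Nfld u (Hcurv u) (x,y) - alpha u (x,y) * (Hcurv u (x,y))\<^sup>2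
             + 2 * (alpha u (x,y))\<^sup>2 * Nfld u \<theta> (x,y)
             + (2/3) * Hcurv u (x,y) * Nperp u (Nperp u \<theta>) (x,y)
             + Nperp u (Nperp u (alpha u)) (x,y)
             = - 2 * alpha u (x,y) * Nperp u (alpha u) (x,y)"
proof -
  have qO: "(x,y) \<in> \<Omega>" using q VO by auto
  have a0: "alpha u (x,y) \<noteq> 0" using nz qO by (simp add: alpha_def)
  have a06: "6 * alpha u (x,y) \<noteq> 0" using a0 by simp
  have cs2: "(cth u (x,y))^2 + (sth u (x,y))^2 = 1" using csV q by (metis sin_cos_squared_add2)
  have sch: "px (py \<theta>) (x,y) = py (px \<theta>) (x,y)" using schwarz_smooth[OF Vo sth q] .
  have I1': "sth u (x,y) * px \<theta> (x,y) - cth u (x,y) * py \<theta> (x,y) = - Hcurv u (x,y)"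
    using NpTh[OF q] unfolding Nperp_def .
  have e: "- Nperp u (alpha u) (x,y) + (1/2) * (alpha u (x,y))^2 + (1/6) * (Hcurv u (x,y))^2 = 0"
    using E1 qO unfolding abs_E1_minimizer_def by blast
  have E1': "sth u (x,y) * px (alpha u) (x,y) - cth u (x,y) * py (alpha u) (x,y) = (alpha u (x,y))^2 / 2 + (Hcurv u (x,y))^2 / 6"
    using e unfolding Nperp_def by simp
  have NT': "cth u (x,y) * px \<theta> (x,y) + sth u (x,y) * py \<theta> (x,y) = -3/2 * alpha u (x,y) + Hcurv u (x,y) * Hcurv u (x,y) / (6 * alpha u (x,y))"
    using NTh[OF q] unfolding Nfld_def .
  have dtx: "((\<lambda>s. px \<theta> (s,y)) has_real_derivative px (px \<theta>) (x,y)) (at x)"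
    using smooth_on_dx[OF smooth_on_px[OF sth] q] .
  have dty: "((\<lambda>s. py \<theta> (s,y)) has_real_derivative px (py \<theta>) (x,y)) (at x)"
    using smooth_on_dx[OF smooth_on_py[OF sth] q] .
  have dtx': "((\<lambda>s. px \<theta> (x,s)) has_real_derivative py (px \<theta>) (x,y)) (at y)"
    using smooth_on_dy[OF smooth_on_px[OF sth] q] .
  have dty': "((\<lambda>s. py \<theta> (x,s)) has_real_derivative py (py \<theta>) (x,y)) (at y)"
    using smooth_on_dy[OF smooth_on_py[OF sth] q] .
  have X1a: "px (Nperp u \<theta>) (x,y) = - px (Hcurv u) (x,y)"
  proof -
    have "px (Nperp u \<theta>) (x,y) = px (\<lambda>z. - Hcurv u z) (x,y)" by (rule px_cong[OF Vo q]) (rule NpTh)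
    also have "\<dots> = - px (Hcurv u) (x,y)" by (rule px_eq) (rule DERIV_minus[OF dH_x[OF qO]])
    finally show ?thesis .
  qed
  have Y1a: "py (Nperp u \<theta>) (x,y) = - py (Hcurv u) (x,y)"
  proof -
    have "py (Nperp u \<theta>) (x,y) = py (\<lambda>z. - Hcurv u z) (x,y)" by (rule py_cong[OF Vo q]) (rule NpTh)
    also have "\<dots> = - py (Hcurv u) (x,y)" by (rule py_eq) (rule DERIV_minus[OF dH_y[OF qO]])
    finally show ?thesis .
  qed
  have X1b: "px (Nperp u \<theta>) (x,y) = sth u (x,y) * px (px \<theta>) (x,y) + px (sth u) (x,y) * px \<theta> (x,y)
       - (cth u (x,y) * px (py \<theta>) (x,y) + px (cth u) (x,y) * py \<theta> (x,y))"
    unfolding Nperp_def by (rule px_eq) (rule DERIV_diff[OF DERIV_mult'[OF dS_x[OF qO] dtx] DERIV_mult'[OF dC_x[OF qO] dty]])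
  have Y1b: "py (Nperp u \<theta>) (x,y) = sth u (x,y) * py (px \<theta>) (x,y) + py (sth u) (x,y) * px \<theta> (x,y)
       - (cth u (x,y) * py (py \<theta>) (x,y) + py (cth u) (x,y) * py \<theta> (x,y))"
    unfolding Nperp_def by (rule py_eq) (rule DERIV_diff[OF DERIV_mult'[OF dS_y[OF qO] dtx'] DERIV_mult'[OF dC_y[OF qO] dty']])
  have X2b: "px (Nfld u \<theta>) (x,y) = cth u (x,y) * px (px \<theta>) (x,y) + px (cth u) (x,y) * px \<theta> (x,y)
       + (sth u (x,y) * px (py \<theta>) (x,y) + px (sth u) (x,y) * py \<theta> (x,y))"
    unfolding Nfld_def by (rule px_eq) (rule DERIV_add[OF DERIV_mult'[OF dC_x[OF qO] dtx] DERIV_mult'[OF dS_x[OF qO] dty]])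
  have Y2b: "py (Nfld u \<theta>) (x,y) = cth u (x,y) * py (px \<theta>) (x,y) + py (cth u) (x,y) * px \<theta> (x,y)
       + (sth u (x,y) * py (py \<theta>) (x,y) + py (sth u) (x,y) * py \<theta> (x,y))"
    unfolding Nfld_def by (rule py_eq) (rule DERIV_add[OF DERIV_mult'[OF dC_y[OF qO] dtx'] DERIV_mult'[OF dS_y[OF qO] dty']])
  have X2a: "px (Nfld u \<theta>) (x,y) = -3/2 * px (alpha u) (x,y) + ((Hcurv u (x,y) * px (Hcurv u) (x,y) + px (Hcurv u) (x,y) * Hcurv u (x,y)) * (6 * alpha u (x,y))
      - Hcurv u (x,y) * Hcurv u (x,y) * (6 * px (alpha u) (x,y))) / ((6 * alpha u (x,y)) * (6 * alpha u (x,y)))"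
  proof -
    have c: "px (Nfld u \<theta>) (x,y) = px (\<lambda>z. -3/2 * alpha u z + Hcurv u z * Hcurv u z / (6 * alpha u z)) (x,y)"
      by (rule px_cong[OF Vo q]) (rule NTh)
    note d = px_eq[OF DERIV_add[OF DERIV_cmult[OF dA_x[OF qO]] DERIV_divide[OF DERIV_mult'[OF dH_x[OF qO] dH_x[OF qO]] DERIV_cmult[OF dA_x[OF qO]] a06]]]
    show ?thesis by (rule trans[OF c d])
  qed
  have Y2a: "py (Nfld u \<theta>) (x,y) = -3/2 * py (alpha u) (x,y) + ((Hcurv u (x,y) * py (Hcurv u) (x,y) + py (Hcurv u) (x,y) * Hcurv u (x,y)) * (6 * alpha u (x,y))
      - Hcurv u (x,y) * Hcurv u (x,y) * (6 * py (alpha u) (x,y))) / ((6 * alpha u (x,y)) * (6 * alpha u (x,y)))"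
  proof -
    have c: "py (Nfld u \<theta>) (x,y) = py (\<lambda>z. -3/2 * alpha u z + Hcurv u z * Hcurv u z / (6 * alpha u z)) (x,y)"
      by (rule py_cong[OF Vo q]) (rule NTh)
    note d = py_eq[OF DERIV_add[OF DERIV_cmult[OF dA_y[OF qO]] DERIV_divide[OF DERIV_mult'[OF dH_y[OF qO] dH_y[OF qO]] DERIV_cmult[OF dA_y[OF qO]] a06]]]
    show ?thesis by (rule trans[OF c d])
  qed
  have NpA: "\<And>z. z \<in> \<Omega> \<Longrightarrow> Nperp u (alpha u) z = 1/2 * (alpha u z * alpha u z) + 1/6 * (Hcurv u z * Hcurv u z)"
  proof -
    fix z assume "z \<in> \<Omega>"
    then have "- Nperp u (alpha u) z + (1/2) * (alpha u z)^2 + (1/6) * (Hcurv u z)^2 = 0"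
      using E1 unfolding abs_E1_minimizer_def by blast
    then show "Nperp u (alpha u) z = 1/2 * (alpha u z * alpha u z) + 1/6 * (Hcurv u z * Hcurv u z)"
      by (simp add: power2_eq_square)
  qed
  have X3: "px (Nperp u (alpha u)) (x,y) = 1/2 * (alpha u (x,y) * px (alpha u) (x,y) + px (alpha u) (x,y) * alpha u (x,y))
       + 1/6 * (Hcurv u (x,y) * px (Hcurv u) (x,y) + px (Hcurv u) (x,y) * Hcurv u (x,y))"
  proof -
    have c: "px (Nperp u (alpha u)) (x,y) = px (\<lambda>z. 1/2 * (alpha u z * alpha u z) + 1/6 * (Hcurv u z * Hcurv u z)) (x,y)"
      by (rule px_cong[OF op qO]) (rule NpA)
    note d = px_eq[OF DERIV_add[OF DERIV_cmult[OF DERIV_mult'[OF dA_x[OF qO] dA_x[OF qO]]] DERIV_cmult[OF DERIV_mult'[OF dH_x[OF qO] dH_x[OF qO]]]]]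
    show ?thesis by (rule trans[OF c d])
  qed
  have Y3: "py (Nperp u (alpha u)) (x,y) = 1/2 * (alpha u (x,y) * py (alpha u) (x,y) + py (alpha u) (x,y) * alpha u (x,y))
       + 1/6 * (Hcurv u (x,y) * py (Hcurv u) (x,y) + py (Hcurv u) (x,y) * Hcurv u (x,y))"
  proof -
    have c: "py (Nperp u (alpha u)) (x,y) = py (\<lambda>z. 1/2 * (alpha u z * alpha u z) + 1/6 * (Hcurv u z * Hcurv u z)) (x,y)"
      by (rule py_cong[OF op qO]) (rule NpA)
    note d = py_eq[OF DERIV_add[OF DERIV_cmult[OF DERIV_mult'[OF dA_y[OF qO] dA_y[OF qO]]] DERIV_cmult[OF DERIV_mult'[OF dH_y[OF qO] dH_y[OF qO]]]]]
    show ?thesis by (rule trans[OF c d])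
  qed
  note F = final_alg[OF cs2 a0 th_cx[OF q] th_cy[OF q] th_sx[OF q] th_sy[OF q] sch I1' E1' NT' X1a X1b Y1a Y1b X2a X2b Y2a Y2b X3 Y3]
  have o1: "Nfld u (Hcurv u) (x,y) = cth u (x,y) * px (Hcurv u) (x,y) + sth u (x,y) * py (Hcurv u) (x,y)"
    by (simp only: Nfld_def)
  have o2: "Nfld u \<theta> (x,y) = cth u (x,y) * px \<theta> (x,y) + sth u (x,y) * py \<theta> (x,y)"
    by (simp only: Nfld_def)
  have o3: "Nperp u (Nperp u \<theta>) (x,y) = sth u (x,y) * px (Nperp u \<theta>) (x,y) - cth u (x,y) * py (Nperp u \<theta>) (x,y)"
    by (rule Nperp_def[THEN fun_cong2])
  have o4: "Nperp u (Nperp u (alpha u)) (x,y) = sth u (x,y) * px (Nperp u (alpha u)) (x,y) - cth u (x,y) * py (Nperp u (alpha u)) (x,y)"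
    by (rule Nperp_def[THEN fun_cong2])
  have o5: "Nperp u (alpha u) (x,y) = sth u (x,y) * px (alpha u) (x,y) - cth u (x,y) * py (alpha u) (x,y)"
    by (simp only: Nperp_def)
  show ?thesis unfolding o1 o2 o3 o4 o5 by (rule F)
qed

end

end

theorem proposition3p2:
  fixes u :: "real \<times> real \<Rightarrow> real" and \<Omega> :: "(real \<times> real) set"
  assumes "open \<Omega>" and "connected \<Omega>"
    and "smooth_on \<Omega> u"
    and "\<forall>p \<in> \<Omega>. Dfun u p \<noteq> 0"
    and "abs_E1_minimizer \<Omega> u"
  shows "\<forall>p \<in> \<Omega>. \<forall>V (\<theta> :: real \<times> real \<Rightarrow> real).
           open V \<and> p \<in> V \<and> V \<subseteq> \<Omega> \<and> smooth_on V \<theta> \<and>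
           (\<forall>q \<in> V. cos (\<theta> q) = cth u q \<and> sin (\<theta> q) = sth u q) \<longrightarrow>
             - alpha u p * Nfld u (Hcurv u) p - alpha u p * (Hcurv u p)\<^sup>2
             + 2 * (alpha u p)\<^sup>2 * Nfld u \<theta> p
             + (2/3) * Hcurv u p * Nperp u (Nperp u \<theta>) p
             + Nperp u (Nperp u (alpha u)) p
             = - 2 * alpha u p * Nperp u (alpha u) p"
proof (intro ballI allI impI, elim conjE)
  fix p V and \<theta> :: "real \<times> real \<Rightarrow> real"
  assume "p \<in> \<Omega>" and Vo: "open V" and pV: "p \<in> V" and VO: "V \<subseteq> \<Omega>" and sth: "smooth_on V \<theta>"
    and csV: "\<forall>q \<in> V. cos (\<theta> q) = cth u q \<and> sin (\<theta> q) = sth u q"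
  obtain x y where pp: "p = (x,y)" by (cases p)
  show "- alpha u p * Nfld u (Hcurv u) p - alpha u p * (Hcurv u p)\<^sup>2
             + 2 * (alpha u p)\<^sup>2 * Nfld u \<theta> p
             + (2/3) * Hcurv u p * Nperp u (Nperp u \<theta>) p
             + Nperp u (Nperp u (alpha u)) p
             = - 2 * alpha u p * Nperp u (alpha u) p"
    unfolding pp
    by (rule main_at[OF assms(1) assms(3) assms(4) Vo VO sth csV assms(5) pV[unfolded pp]])
qed

end
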